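(* Let $\mathcal F$ be a proper filter on $\omega$ and consider the game $\mathfrak G(\mathcal F,[\omega]^{<\omega},\mathcal F)$. Then (1) player I has no winning strategy if and only if $\mathcal F$ is a non-meager P-filter; (2) player II never has a winning strategy.
   Context: A filter on $\omega$ is a family $\mathcal F\subseteq\mathcal P(\omega)$ closed under finite intersections and supersets and containing all cofinite sets; it is proper if all its members are infinite. $\mathcal P(\omega)$ is identified with $2^\omega$ with the product topology; "meager" refers to this topology. $\mathcal F$ is a P-filter if for every sequence $\langle X_n\rangle\subseteq\mathcal F$ there is $X\in\mathcal F$ with $X\setminus X_n$ finite for all $n$. Game $\mathfrak G(\mathcal X,[\omega]^{<\omega},\mathcal Z)$: at each stage $k\in\omega$, player I chooses $X_k\in\mathcal X$ and player II responds with a nonempty finite set $s_k\subseteq X_k$; II wins if $\bigcup_k s_k\in\mathcal Z$, otherwise I wins. *)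

theory Defs
  imports "HOL-Analysis.Analysis"
begin

definition is_filter :: "nat set set \<Rightarrow> bool" where
  "is_filter F \<longleftrightarrow>
     (\<forall>A\<in>F. \<forall>B\<in>F. A \<inter> B \<in> F) \<and>
     (\<forall>A\<in>F. \<forall>B. A \<subseteq> B \<longrightarrow> B \<in> F) \<and>
     (\<forall>A. finite (- A) \<longrightarrow> A \<in> F)"

definition proper_filter :: "nat set set \<Rightarrow> bool" where
  "proper_filter F \<longleftrightarrow> is_filter F \<and> (\<forall>A\<in>F. infinite A)"

definition P_filter :: "nat set set \<Rightarrow> bool" where
  "P_filter F \<longleftrightarrow> is_filter F \<and>
     (\<forall>Xs :: nat \<Rightarrow> nat set. (\<forall>n. Xs n \<in> F) \<longrightarrow>
        (\<exists>X\<in>F. \<forall>n. finite (X - Xs n)))"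

definition nowhere_dense :: "'a::topological_space set \<Rightarrow> bool" where
  "nowhere_dense S \<longleftrightarrow> interior (closure S) = {}"

definition meager :: "'a::topological_space set \<Rightarrow> bool" where
  "meager S \<longleftrightarrow> (\<exists>N :: nat \<Rightarrow> 'a set. (\<forall>n. nowhere_dense (N n)) \<and> S \<subseteq> (\<Union>n. N n))"

text \<open>P(omega) is identified with 2^omega = (nat => bool) with the product topology
  (bool carries its order topology, which is discrete), via characteristic functions.\<close>

definition char_fun :: "nat set \<Rightarrow> (nat \<Rightarrow> bool)" where
  "char_fun A = (\<lambda>n. n \<in> A)"

definition meager_family :: "nat set set \<Rightarrow> bool" where
  "meager_family F \<longleftrightarrow> meager (char_fun ` F)"

text \<open>A strategy for player I maps the list of
  II's previous moves to I's next move (I's own earlier moves are determined by them).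
  A strategy for player II maps the list of I's moves so far (ending in the current
  move X_k) to a nonempty finite subset of X_k.\<close>

definition strategy_I :: "nat set set \<Rightarrow> (nat set list \<Rightarrow> nat set) \<Rightarrow> bool" where
  "strategy_I \<X> \<sigma> \<longleftrightarrow> (\<forall>h. \<sigma> h \<in> \<X>)"

definition play_vs_I :: "(nat set list \<Rightarrow> nat set) \<Rightarrow> (nat \<Rightarrow> nat set) \<Rightarrow> bool" where
  "play_vs_I \<sigma> s \<longleftrightarrow>
     (\<forall>k. finite (s k) \<and> s k \<noteq> {} \<and> s k \<subseteq> \<sigma> (map s [0..<k]))"

definition I_has_winning_strategy :: "nat set set \<Rightarrow> nat set set \<Rightarrow> bool" where
  "I_has_winning_strategy \<X> \<Z> \<longleftrightarrow>
     (\<exists>\<sigma>. strategy_I \<X> \<sigma> \<and> (\<forall>s. play_vs_I \<sigma> s \<longrightarrow> (\<Union>k. s k) \<notin> \<Z>))"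

definition strategy_II :: "nat set set \<Rightarrow> (nat set list \<Rightarrow> nat set) \<Rightarrow> bool" where
  "strategy_II \<X> \<tau> \<longleftrightarrow>
     (\<forall>xs. xs \<noteq> [] \<longrightarrow> set xs \<subseteq> \<X> \<longrightarrow>
        finite (\<tau> xs) \<and> \<tau> xs \<noteq> {} \<and> \<tau> xs \<subseteq> last xs)"

definition II_has_winning_strategy :: "nat set set \<Rightarrow> nat set set \<Rightarrow> bool" where
  "II_has_winning_strategy \<X> \<Z> \<longleftrightarrow>
     (\<exists>\<tau>. strategy_II \<X> \<tau> \<and>
        (\<forall>X :: nat \<Rightarrow> nat set. (\<forall>k. X k \<in> \<X>) \<longrightarrow>
           (\<Union>k. \<tau> (map X [0..<Suc k])) \<in> \<Z>))"

end

theory Submission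
  imports Defs
begin


definition cyl :: "nat \<Rightarrow> nat set \<Rightarrow> (nat \<Rightarrow> bool) set" where
  "cyl m t = {x. \<forall>j<m. x j = (j \<in> t)}"

lemma open_cyl: "open (cyl m t)"
proof -
  have "open {f::nat\<Rightarrow>bool. \<forall>i\<in>{..<m}. f (id i) \<in> {i \<in> t}}"
    by (rule product_topology_basis') (auto intro: open_discrete)
  moreover have "{f::nat\<Rightarrow>bool. \<forall>i\<in>{..<m}. f (id i) \<in> {i \<in> t}} = cyl m t"
    by (auto simp: cyl_def)
  ultimately show ?thesis by simp
qed

lemma char_in_cyl: "char_fun A \<in> cyl m t \<longleftrightarrow> A \<inter> {..<m} = t \<inter> {..<m}"
  by (auto simp: cyl_def char_fun_def)

lemma cyl_mono:
  assumes "m \<le> m'" "t' \<inter> {..<m} = t \<inter> {..<m}"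
  shows "cyl m' t' \<subseteq> cyl m t"
proof
  fix x assume "x \<in> cyl m' t'"
  then have h: "\<forall>j<m'. x j = (j \<in> t')" by (simp add: cyl_def)
  have "x j = (j \<in> t)" if "j < m" for j
  proof -
    have "x j = (j \<in> t')" using h that assms(1) by simp
    also have "\<dots> = (j \<in> t)" using assms(2) that by blast
    finally show ?thesis .
  qed
  then show "x \<in> cyl m t" by (simp add: cyl_def)
qed

lemma open_contains_cyl:
  assumes "open U" "x \<in> U"
  shows "\<exists>m. cyl m {j. x j} \<subseteq> U"
proof -
  from assms have "openin (product_topology (\<lambda>i. euclidean) UNIV) U"
    by (simp add: open_fun_def)
  then obtain V where V: "finite {i \<in> UNIV. V i \<noteq> topspace (euclidean::bool topology)}"
     "x \<in> Pi\<^sub>E UNIV V" "Pi\<^sub>E UNIV V \<subseteq> U"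
    using assms(2) unfolding openin_product_topology_alt by blast
  have fS: "finite {i. V i \<noteq> UNIV}" using V(1) by simp
  then obtain m where "{i. V i \<noteq> UNIV} \<subseteq> {..<m}" using finite_nat_bounded by blast
  then have m: "\<And>i. V i \<noteq> UNIV \<Longrightarrow> i < m" by blast
  have xV: "x i \<in> V i" for i using V(2) by (rule PiE_mem) simp
  have "cyl m {j. x j} \<subseteq> Pi\<^sub>E UNIV V"
  proof
    fix y assume y: "y \<in> cyl m {j. x j}"
    show "y \<in> Pi\<^sub>E UNIV V"
    proof (rule PiE_I)
      fix i :: nat
      show "y i \<in> V i"
      proof (cases "i < m")
        case True
        then have "y i = x i" using y by (simp add: cyl_def)
        then show ?thesis using xV by simp
      next
        case False
        then have "V i = UNIV" using m by blast
        then show ?thesis by simp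
      qed
    qed simp
  qed
  then show ?thesis using V(3) by blast
qed

lemma nowhere_dense_ext:
  assumes "nowhere_dense N"
  shows "\<exists>m'\<ge>m. \<exists>t'. t' \<inter> {..<m} = t \<inter> {..<m} \<and> cyl m' t' \<inter> N = {}"
proof -
  have ne: "char_fun t \<in> cyl m t" by (simp add: char_in_cyl)
  have "\<not> cyl m t \<subseteq> closure N"
  proof
    assume "cyl m t \<subseteq> closure N"
    then have "cyl m t \<subseteq> interior (closure N)"
      using open_cyl interior_maximal by blast
    then show False using assms ne unfolding nowhere_dense_def by blast
  qed
  then obtain x where x: "x \<in> cyl m t" "x \<notin> closure N" by blast
  have "open (cyl m t \<inter> - closure N)" by (intro open_Int open_cyl open_Compl closed_closure)
  then obtain m0 where m0: "cyl m0 {j. x j} \<subseteq> cyl m t \<inter> - closure N"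
    using open_contains_cyl[OF _ IntI[OF x(1)], of "- closure N"] x(2) by blast
  have "cyl (max m m0) {j. x j} \<subseteq> cyl m0 {j. x j}" by (rule cyl_mono) auto
  moreover have "{j. x j} \<inter> {..<m} = t \<inter> {..<m}"
  proof -
    have "\<forall>j<m. x j = (j \<in> t)" using x(1) by (simp add: cyl_def)
    then show ?thesis by blast
  qed
  moreover have "cyl (max m m0) {j. x j} \<inter> N = {}"
    using calculation(1) m0 closure_subset[of N] by blast
  ultimately have "m \<le> max m m0 \<and> {j. x j} \<inter> {..<m} = t \<inter> {..<m} \<and> cyl (max m m0) {j. x j} \<inter> N = {}"
    by simp
  then show ?thesis by blast
qed

lemma nowhere_dense_crit:
  assumes "\<And>m t. \<exists>m' t'. t' \<inter> {..<m} = t \<inter> {..<m} \<and> cyl m' t' \<inter> N = {}"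
  shows "nowhere_dense N"
  unfolding nowhere_dense_def
proof (rule ccontr)
  assume "interior (closure N) \<noteq> {}"
  then obtain x where x: "x \<in> interior (closure N)" by auto
  then obtain m where m: "cyl m {j. x j} \<subseteq> interior (closure N)"
    using open_contains_cyl[OF open_interior x] by blast
  obtain m' t' where t': "t' \<inter> {..<m} = {j. x j} \<inter> {..<m}" "cyl m' t' \<inter> N = {}"
    using assms[of m "{j. x j}"] by blast
  let ?V = "cyl m' t' \<inter> cyl m {j. x j}"
  have "open ?V" by (intro open_Int open_cyl)
  moreover have "?V \<inter> N = {}" using t' by blast
  ultimately have "?V \<inter> closure N = {}" using open_Int_closure_eq_empty[of ?V N] by simp
  moreover have "char_fun t' \<in> ?V" using t'(1) by (simp add: char_in_cyl)
  moreover have "?V \<subseteq> closure N" using m interior_subset[of "closure N"] by blast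
  ultimately show False by blast
qed



lemma strict_mono_ge: "strict_mono (m::nat\<Rightarrow>nat) \<Longrightarrow> i \<le> m i"
  using strict_mono_imp_increasing by blast

lemma strict_mono_interval:
  assumes "strict_mono (c::nat\<Rightarrow>nat)" "c 0 \<le> b"
  shows "\<exists>k. c k \<le> b \<and> b < c (Suc k)"
proof -
  let ?K = "{k. c k \<le> b}"
  have fin: "finite ?K"
  proof (rule finite_subset)
    show "?K \<subseteq> {..b}" using strict_mono_ge[OF assms(1)] by (auto intro: order_trans)
  qed auto
  have "0 \<in> ?K" using assms(2) by simp
  then have ne: "?K \<noteq> {}" by blast
  let ?k = "Max ?K"
  have "?k \<in> ?K" using Max_in[OF fin ne] .
  moreover have "\<not> c (Suc ?k) \<le> b"
  proof
    assume "c (Suc ?k) \<le> b"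
    then have "Suc ?k \<in> ?K" by simp
    then have "Suc ?k \<le> ?k" using Max_ge[OF fin] by blast
    then show False by simp
  qed
  ultimately show ?thesis by (intro exI[of _ ?k]) auto
qed

lemma nonmeager_missing:
  assumes "\<not> meager_family F" "strict_mono (m::nat\<Rightarrow>nat)"
  shows "\<exists>A\<in>F. infinite {i. A \<inter> {m i..<m (Suc i)} = {}}"
proof (rule ccontr)
  assume "\<not> ?thesis"
  then have fin: "\<And>A. A \<in> F \<Longrightarrow> finite {i. A \<inter> {m i..<m (Suc i)} = {}}" by blast
  define M where "M n = {x::nat\<Rightarrow>bool. \<forall>i\<ge>n. \<exists>j\<in>{m i..<m (Suc i)}. x j}" for n
  have cover: "char_fun ` F \<subseteq> (\<Union>n. M n)"
  proof
    fix y assume "y \<in> char_fun ` F"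
    then obtain A where A: "A \<in> F" "y = char_fun A" by blast
    obtain n where n: "\<And>i. i \<in> {i. A \<inter> {m i..<m (Suc i)} = {}} \<Longrightarrow> i < n"
      using finite_nat_bounded[OF fin[OF A(1)]] by (auto simp: subset_eq)
    have "y \<in> M n"
      unfolding M_def
    proof (safe)
      fix i assume "n \<le> i"
      then have "A \<inter> {m i..<m (Suc i)} \<noteq> {}" using n by force
      then show "\<exists>j\<in>{m i..<m (Suc i)}. y j" using A(2) by (auto simp: char_fun_def)
    qed
    then show "y \<in> (\<Union>n. M n)" by blast
  qed
  have nd: "nowhere_dense (M n)" for n
  proof (rule nowhere_dense_crit)
    fix m0 t
    let ?i = "max n m0"
    have "m0 \<le> m ?i" using strict_mono_ge[OF assms(2), of ?i] by simp
    have "cyl (m (Suc ?i)) (t \<inter> {..<m0}) \<inter> M n = {}"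
    proof (rule ccontr)
      assume "\<not> ?thesis"
      then obtain x where x: "x \<in> cyl (m (Suc ?i)) (t \<inter> {..<m0})" "x \<in> M n" by blast
      have "\<forall>i\<ge>n. \<exists>j\<in>{m i..<m (Suc i)}. x j" using x(2) unfolding M_def by simp
      then have "\<exists>j\<in>{m ?i..<m (Suc ?i)}. x j" by (meson max.cobounded1)
      then obtain j where j: "j \<in> {m ?i..<m (Suc ?i)}" "x j" by blast
      then have "j \<in> t \<inter> {..<m0}" using x(1) by (auto simp: cyl_def)
      then show False using j(1) \<open>m0 \<le> m ?i\<close> by auto
    qed
    then show "\<exists>m' t'. t' \<inter> {..<m0} = t \<inter> {..<m0} \<and> cyl m' t' \<inter> M n = {}"
      by (intro exI[of _ "m (Suc ?i)"] exI[of _ "t \<inter> {..<m0}"]) auto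
  qed
  have "meager_family F"
    unfolding meager_family_def meager_def using cover nd by blast
  then show False using assms(1) by blast
qed



lemma restrict_eq:
  assumes "A \<inter> {..<b} = B \<inter> {..<b}" "a \<le> (b::nat)"
  shows "A \<inter> {..<a} = B \<inter> {..<a}"
proof -
  have "A \<inter> {..<a} = (A \<inter> {..<b}) \<inter> {..<a}" using assms(2) by auto
  also have "\<dots> = (B \<inter> {..<b}) \<inter> {..<a}" using assms(1) by simp
  also have "\<dots> = B \<inter> {..<a}" using assms(2) by auto
  finally show ?thesis .
qed

lemma ext_many:
  fixes i :: nat
  assumes nd: "\<And>n. nowhere_dense (N n)"
  shows "\<exists>b>a. \<exists>t'. t' \<inter> {..<a} = t \<inter> {..<a} \<and> (\<forall>j\<le>i. cyl b t' \<inter> N j = {})"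
proof (induction i)
  case 0
  obtain m' t' where m': "m' \<ge> Suc a" "t' \<inter> {..<Suc a} = t \<inter> {..<Suc a}" "cyl m' t' \<inter> N 0 = {}"
    using nowhere_dense_ext[OF nd[of 0], of "Suc a" t] by blast
  have "t' \<inter> {..<a} = t \<inter> {..<a}" using restrict_eq[OF m'(2)] by simp
  moreover have "\<forall>j\<le>0. cyl m' t' \<inter> N j = {}" using m'(3) by simp
  moreover have "m' > a" using m'(1) by simp
  ultimately show ?case by blast
next
  case (Suc i)
  then obtain b t' where b: "b > a" "t' \<inter> {..<a} = t \<inter> {..<a}" "\<forall>j\<le>i. cyl b t' \<inter> N j = {}"
    by blast
  obtain m'' t'' where m'': "m'' \<ge> b" "t'' \<inter> {..<b} = t' \<inter> {..<b}" "cyl m'' t'' \<inter> N (Suc i) = {}"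
    using nowhere_dense_ext[OF nd[of "Suc i"], of b t'] by blast
  have sub: "cyl m'' t'' \<subseteq> cyl b t'" by (rule cyl_mono[OF m''(1,2)])
  have "t'' \<inter> {..<a} = t' \<inter> {..<a}"
    using restrict_eq[OF m''(2)] b(1) by simp
  then have "t'' \<inter> {..<a} = t \<inter> {..<a}" using b(2) by simp
  moreover have "\<forall>j\<le>Suc i. cyl m'' t'' \<inter> N j = {}"
  proof (intro allI impI)
    fix j assume "j \<le> Suc i"
    then consider "j \<le> i" | "j = Suc i" by linarith
    then show "cyl m'' t'' \<inter> N j = {}"
    proof cases
      case 1 then show ?thesis using b(3) sub by blast
    next
      case 2 then show ?thesis using m''(3) by simp
    qed
  qed
  moreover have "m'' > a" using m''(1) b(1) by simp
  ultimately show ?case by blast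
qed

lemma ext_all:
  fixes i :: nat
  assumes nd: "\<And>n. nowhere_dense (N n)"
  shows "\<exists>b>a. \<forall>t\<subseteq>{..<a}. \<exists>t'. t' \<inter> {..<a} = t \<and> (\<forall>j\<le>i. cyl b t' \<inter> N j = {})"
proof -
  define P where "P t p \<longleftrightarrow> fst p > a \<and> snd p \<inter> {..<a} = t \<inter> {..<a} \<and> (\<forall>j\<le>i. cyl (fst p) (snd p) \<inter> N j = {})" for t p
  have "\<exists>p. P t p" for t
  proof -
    obtain b t' where bt: "b > a" "t' \<inter> {..<a} = t \<inter> {..<a}" "\<forall>j\<le>i. cyl b t' \<inter> N j = {}"
      using ext_many[where N=N and a=a and t=t and i=i, OF nd] by blast
    have "P t (b, t')" unfolding P_def fst_conv snd_conv using bt by (intro conjI)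
    then show ?thesis by (rule exI)
  qed
  then have "\<forall>t. \<exists>p. P t p" by blast
  then obtain f where f: "\<And>t. P t (f t)" using choice by metis
  define B where "B t = fst (f t)" for t
  define T where "T t = snd (f t)" for t
  have BT: "B t > a" "T t \<inter> {..<a} = t \<inter> {..<a}" "\<forall>j\<le>i. cyl (B t) (T t) \<inter> N j = {}" for t
    using f[of t] unfolding P_def B_def T_def by auto
  define b where "b = Max (insert (Suc a) (B ` Pow {..<a}))"
  have fin: "finite (insert (Suc a) (B ` Pow {..<a}))" by simp
  have "Suc a \<le> b" unfolding b_def by (rule Max_ge[OF fin]) simp
  then have "b > a" by simp
  moreover have "\<exists>t'. t' \<inter> {..<a} = t \<and> (\<forall>j\<le>i. cyl b t' \<inter> N j = {})" if "t \<subseteq> {..<a}" for t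
  proof -
    have "B t \<le> b" unfolding b_def using that by (intro Max_ge[OF fin]) auto
    then have sub: "cyl b (T t) \<subseteq> cyl (B t) (T t)" by (rule cyl_mono) simp
    have "T t \<inter> {..<a} = t" using BT(2)[of t] that by auto
    moreover have "\<forall>j\<le>i. cyl b (T t) \<inter> N j = {}" using BT(3)[of t] sub by blast
    ultimately show ?thesis by blast
  qed
  ultimately show ?thesis by blast
qed

lemma meager_partition:
  assumes "meager_family F" and up: "\<And>A B. A \<in> F \<Longrightarrow> A \<subseteq> B \<Longrightarrow> B \<in> F"
  shows "\<exists>m. strict_mono (m::nat\<Rightarrow>nat) \<and> m 0 = 0 \<and>
           (\<forall>A\<in>F. finite {i. A \<inter> {m i..<m (Suc i)} = {}})"
proof -
  have "\<exists>N :: nat \<Rightarrow> (nat\<Rightarrow>bool) set. (\<forall>n. nowhere_dense (N n)) \<and> char_fun ` F \<subseteq> (\<Union>n. N n)"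
    using assms(1) unfolding meager_family_def meager_def .
  then obtain N :: "nat \<Rightarrow> (nat\<Rightarrow>bool) set" where nd0: "\<forall>n. nowhere_dense (N n)" and cov: "char_fun ` F \<subseteq> (\<Union>n. N n)"
    by blast
  have nd: "\<And>n. nowhere_dense (N n)" using nd0 by simp
  define nxt where "nxt a i = (SOME b. b > a \<and> (\<forall>t\<subseteq>{..<a}. \<exists>t'. t' \<inter> {..<a} = t \<and> (\<forall>j\<le>i. cyl b t' \<inter> N j = {})))" for a i
  have nxt: "nxt a i > a \<and> (\<forall>t\<subseteq>{..<a}. \<exists>t'. t' \<inter> {..<a} = t \<and> (\<forall>j\<le>i. cyl (nxt a i) t' \<inter> N j = {}))" for a i
    unfolding nxt_def by (rule someI_ex) (rule ext_all[where N=N, OF nd])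
  define m where "m = rec_nat 0 (\<lambda>i a. nxt a i)"
  have m0: "m 0 = 0" and mS: "m (Suc i) = nxt (m i) i" for i by (simp_all add: m_def)
  have sm: "strict_mono m" by (rule strict_monoI_Suc) (simp add: mS nxt)
  define ex where "ex i t = (SOME t'. t' \<inter> {..<m i} = t \<and> (\<forall>j\<le>i. cyl (m (Suc i)) t' \<inter> N j = {}))" for i t
  have ex: "ex i t \<inter> {..<m i} = t \<and> (\<forall>j\<le>i. cyl (m (Suc i)) (ex i t) \<inter> N j = {})"
    if "t \<subseteq> {..<m i}" for i t
  proof -
    have h: "\<forall>t\<subseteq>{..<m i}. \<exists>t'. t' \<inter> {..<m i} = t \<and> (\<forall>j\<le>i. cyl (m (Suc i)) t' \<inter> N j = {})"
      using conjunct2[OF nxt[of "m i" i]] unfolding mS .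
    show ?thesis unfolding ex_def by (rule someI_ex) (rule h[rule_format, OF that])
  qed
  have "finite {i. A \<inter> {m i..<m (Suc i)} = {}}" if A: "A \<in> F" for A
  proof (rule ccontr)
    assume inf: "infinite {i. A \<inter> {m i..<m (Suc i)} = {}}"
    let ?J = "\<lambda>i. {m i..<m (Suc i)}"
    define D where "D = rec_nat {} (\<lambda>i d. if A \<inter> ?J i = {} then ex i d \<inter> {..<m (Suc i)} else d \<union> (A \<inter> ?J i))"
    have D0: "D 0 = {}" and DS: "D (Suc i) = (if A \<inter> ?J i = {} then ex i (D i) \<inter> {..<m (Suc i)} else D i \<union> (A \<inter> ?J i))" for i
      by (simp_all add: D_def)
    have Dsub: "D i \<subseteq> {..<m i}" for i
    proof (induction i)
      case 0 then show ?case by (simp add: D0)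
    next
      case (Suc i)
      have "m i < m (Suc i)" using sm by (simp add: strict_mono_def)
      then show ?case using Suc by (auto simp: DS)
    qed
    have Dstep: "D (Suc i) \<inter> {..<m i} = D i" for i
    proof (cases "A \<inter> ?J i = {}")
      case True
      have "m i < m (Suc i)" using sm by (simp add: strict_mono_def)
      then have "D (Suc i) \<inter> {..<m i} = ex i (D i) \<inter> {..<m i}" using True by (auto simp: DS)
      then show ?thesis using ex[OF Dsub] by simp
    next
      case False
      then show ?thesis using Dsub[of i] by (auto simp: DS)
    qed
    have Dmono: "D (i + k) \<inter> {..<m i} = D i" for i k
    proof (induction k)
      case 0 then show ?case using Dsub[of i] by auto
    next
      case (Suc k)
      have "m i \<le> m (i + k)" using sm by (simp add: strict_mono_less_eq)
      then have "D (i + Suc k) \<inter> {..<m i} = (D (Suc (i + k)) \<inter> {..<m (i+k)}) \<inter> {..<m i}"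
        by auto
      also have "\<dots> = D (i + k) \<inter> {..<m i}" using Dstep[of "i+k"] by simp
      finally show ?case using Suc by simp
    qed
    define A' where "A' = (\<Union>i. D i)"
    have A'cut: "A' \<inter> {..<m i} = D i" for i
    proof
      show "D i \<subseteq> A' \<inter> {..<m i}" using Dsub[of i] unfolding A'_def by blast
      show "A' \<inter> {..<m i} \<subseteq> D i"
      proof
        fix x assume "x \<in> A' \<inter> {..<m i}"
        then obtain j where x: "x \<in> D j" "x < m i" unfolding A'_def by blast
        show "x \<in> D i"
        proof (cases "j \<le> i")
          case True
          then obtain k where "i = j + k" using le_Suc_ex[OF True] by blast
          then have "D i \<inter> {..<m j} = D j" using Dmono[of j k] by simp
          then show ?thesis using x by blast
        next
          case False
          then have "i \<le> j" by simp
          then obtain k where "j = i + k" using le_Suc_ex by blast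
          then have "D j \<inter> {..<m i} = D i" using Dmono[of i k] by simp
          then show ?thesis using x by blast
        qed
      qed
    qed
    have "A \<subseteq> A'"
    proof
      fix x assume "x \<in> A"
      obtain i where i: "m i \<le> x" "x < m (Suc i)" using strict_mono_interval[OF sm, of x] m0 by auto
      then have "A \<inter> ?J i \<noteq> {}" using \<open>x \<in> A\<close> by auto
      then have "x \<in> D (Suc i)" using i \<open>x \<in> A\<close> by (simp add: DS)
      then show "x \<in> A'" unfolding A'_def by blast
    qed
    then have "A' \<in> F" using up[OF A] by blast
    then obtain n where n: "char_fun A' \<in> N n" using cov by blast
    obtain i where i: "i \<ge> n" "A \<inter> ?J i = {}"
    proof -
      have "\<exists>i\<ge>n. i \<in> {i. A \<inter> ?J i = {}}" using inf unfolding infinite_nat_iff_unbounded_le by blast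
      then show ?thesis using that by blast
    qed
    have "char_fun A' \<in> cyl (m (Suc i)) (D (Suc i))"
    proof -
      have "A' \<inter> {..<m (Suc i)} = D (Suc i) \<inter> {..<m (Suc i)}" using A'cut[of "Suc i"] Dsub[of "Suc i"] by blast
      then show ?thesis by (simp add: char_in_cyl)
    qed
    moreover have "cyl (m (Suc i)) (D (Suc i)) = cyl (m (Suc i)) (ex i (D i))"
      using i(2) by (auto simp: DS cyl_def)
    moreover have "cyl (m (Suc i)) (ex i (D i)) \<inter> N n = {}" using ex[OF Dsub[of i]] i(1) by blast
    ultimately show False using n by blast
  qed
  then show ?thesis using sm m0 by blast
qed



lemma pf_inter: "proper_filter F \<Longrightarrow> A \<in> F \<Longrightarrow> B \<in> F \<Longrightarrow> A \<inter> B \<in> F"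
  unfolding proper_filter_def is_filter_def by blast
lemma pf_up: "proper_filter F \<Longrightarrow> A \<in> F \<Longrightarrow> A \<subseteq> B \<Longrightarrow> B \<in> F"
  unfolding proper_filter_def is_filter_def by blast
lemma pf_cofin: "proper_filter F \<Longrightarrow> finite (- A) \<Longrightarrow> A \<in> F"
  unfolding proper_filter_def is_filter_def by blast
lemma pf_inf: "proper_filter F \<Longrightarrow> A \<in> F \<Longrightarrow> infinite A"
  unfolding proper_filter_def by blast
lemma pf_atLeast:
  assumes "proper_filter F" shows "{n::nat..} \<in> F"
proof -
  have "- {n..} = {..<n}" by auto
  then have "finite (- {n..})" by simp
  then show ?thesis by (rule pf_cofin[OF assms])
qed
lemma pf_Inter:
  assumes "proper_filter F" "finite S" "S \<noteq> {}" "S \<subseteq> F"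
  shows "\<Inter> S \<in> F"
  using assms(2,3,4)
proof (induction S rule: finite_ne_induct)
  case (singleton x) then show ?case by simp
next
  case (insert x S)
  then have "x \<in> F" "\<Inter> S \<in> F" by auto
  then have "x \<inter> \<Inter> S \<in> F" by (rule pf_inter[OF assms(1)])
  then show ?case by simp
qed

lemma notP_I_wins:
  assumes pf: "proper_filter F" and nP: "\<not> P_filter F"
  shows "I_has_winning_strategy F F"
proof -
  have "is_filter F" using pf by (simp add: proper_filter_def)
  then obtain Xs :: "nat \<Rightarrow> nat set" where Xs: "\<And>n. Xs n \<in> F" and no: "\<not> (\<exists>X\<in>F. \<forall>n. finite (X - Xs n))"
    using nP unfolding P_filter_def by blast
  define Y where "Y n = \<Inter> (Xs ` {..n})" for n
  have Y: "Y n \<in> F" for n unfolding Y_def by (rule pf_Inter[OF pf]) (use Xs in auto)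
  define \<sigma> where "\<sigma> h = Y (length h)" for h :: "nat set list"
  have "strategy_I F \<sigma>" unfolding strategy_I_def \<sigma>_def using Y by blast
  moreover have "(\<Union>k. s k) \<notin> F" if play: "play_vs_I \<sigma> s" for s
  proof
    assume U: "(\<Union>k. s k) \<in> F"
    have sk: "s k \<subseteq> Y k" for k using play unfolding play_vs_I_def \<sigma>_def by simp
    have "finite ((\<Union>k. s k) - Xs n)" for n
    proof (rule finite_subset)
      show "(\<Union>k. s k) - Xs n \<subseteq> (\<Union>k<n. s k)"
      proof
        fix x assume "x \<in> (\<Union>k. s k) - Xs n"
        then obtain k where k: "x \<in> s k" "x \<notin> Xs n" by blast
        have "k < n"
        proof (rule ccontr)
          assume "\<not> k < n"
          then have "Y k \<subseteq> Xs n" unfolding Y_def by auto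
          then show False using k sk by blast
        qed
        then show "x \<in> (\<Union>k<n. s k)" using k by blast
      qed
      show "finite (\<Union>k<n. s k)" using play unfolding play_vs_I_def by simp
    qed
    then show False using no U by blast
  qed
  ultimately show ?thesis unfolding I_has_winning_strategy_def by blast
qed

lemma meager_I_wins:
  assumes pf: "proper_filter F" and mg: "meager_family F"
  shows "I_has_winning_strategy F F"
proof -
  obtain mm where sm: "strict_mono (mm::nat\<Rightarrow>nat)" and m0: "mm 0 = 0"
    and fin: "\<And>A. A \<in> F \<Longrightarrow> finite {i. A \<inter> {mm i..<mm (Suc i)} = {}}"
  proof -
    have up: "\<And>A B. A \<in> F \<Longrightarrow> A \<subseteq> B \<Longrightarrow> B \<in> F" by (rule pf_up[OF pf])
    have "\<exists>m. strict_mono (m::nat\<Rightarrow>nat) \<and> m 0 = 0 \<and> (\<forall>A\<in>F. finite {i. A \<inter> {m i..<m (Suc i)} = {}})"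
      by (rule meager_partition[OF mg]) (rule up)
    then show ?thesis using that by blast
  qed
  define r where "r h = Max (insert 0 (\<Union> (set h)))" for h :: "nat set list"
  define \<sigma> where "\<sigma> h = {mm (Suc (Suc (r h)))..}" for h
  have "strategy_I F \<sigma>" unfolding strategy_I_def \<sigma>_def using pf_atLeast[OF pf] by blast
  moreover have "(\<Union>k. s k) \<notin> F" if play: "play_vs_I \<sigma> s" for s
  proof
    assume U: "(\<Union>k. s k) \<in> F"
    define R where "R k = r (map s [0..<k])" for k
    have fins: "finite (s k)" and nes: "s k \<noteq> {}" and sk: "s k \<subseteq> {mm (Suc (Suc (R k)))..}" for k
      using play unfolding play_vs_I_def \<sigma>_def R_def by auto
    have Rdef: "R k = Max (insert 0 (\<Union>j<k. s j))" for k
      unfolding R_def r_def by (simp add: atLeast0LessThan)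
    have finU: "finite (insert 0 (\<Union>j<k. s j))" for k using fins by simp
    have Rmono: "R k \<le> R k'" if "k \<le> k'" for k k'
      unfolding Rdef using that by (intro Max_mono) (auto simp: finU fins)
    have bound: "x \<le> R k" if "x \<in> s j" "j < k" for x j k
      unfolding Rdef using that by (intro Max_ge[OF finU]) auto
    have mmge: "i \<le> mm i" for i using strict_mono_ge[OF sm] .
    have Rsm: "strict_mono R"
    proof (rule strict_monoI_Suc)
      fix k
      obtain x where x: "x \<in> s k" using nes by blast
      then have "mm (Suc (Suc (R k))) \<le> x" using sk by auto
      moreover have "x \<le> R (Suc k)" using bound[OF x] by simp
      ultimately show "R k < R (Suc k)" using mmge[of "Suc (Suc (R k))"] by simp
    qed
    have miss: "(\<Union>k. s k) \<inter> {mm (Suc (R k))..<mm (Suc (Suc (R k)))} = {}" for k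
    proof (rule ccontr)
      assume "\<not> ?thesis"
      then obtain x j where x: "x \<in> s j" "mm (Suc (R k)) \<le> x" "x < mm (Suc (Suc (R k)))" by auto
      show False
      proof (cases "j < k")
        case True
        then have "x \<le> R k" using bound x by blast
        then show ?thesis using x(2) mmge[of "Suc (R k)"] by simp
      next
        case False
        then have "R k \<le> R j" using Rmono by simp
        then have "mm (Suc (Suc (R k))) \<le> mm (Suc (Suc (R j)))" using sm by (simp add: strict_mono_less_eq)
        moreover have "mm (Suc (Suc (R j))) \<le> x" using sk x(1) by auto
        ultimately show ?thesis using x(3) by simp
      qed
    qed
    have "range (\<lambda>k. Suc (R k)) \<subseteq> {i. (\<Union>k. s k) \<inter> {mm i..<mm (Suc i)} = {}}"
      using miss by auto
    moreover have "infinite (range (\<lambda>k. Suc (R k)))"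
    proof -
      have "strict_mono (\<lambda>k. Suc (R k))" using Rsm by (simp add: strict_mono_def)
      then have "inj (\<lambda>k. Suc (R k))" by (rule strict_mono_imp_inj_on)
      then show ?thesis using range_inj_infinite by blast
    qed
    ultimately show False using fin[OF U] finite_subset by blast
  qed
  ultimately show ?thesis unfolding I_has_winning_strategy_def by blast
qed



lemma PNM_not_I:
  assumes pf: "proper_filter F" and P: "P_filter F" and nm: "\<not> meager_family F"
  shows "\<not> I_has_winning_strategy F F"
proof
  assume "I_has_winning_strategy F F"
  then have "\<exists>\<sigma>. strategy_I F \<sigma> \<and> (\<forall>s. play_vs_I \<sigma> s \<longrightarrow> (\<Union>k. s k) \<notin> F)"
    unfolding I_has_winning_strategy_def .
  then obtain \<sigma> :: "nat set list \<Rightarrow> nat set" where sg: "strategy_I F \<sigma>"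
    and win: "\<forall>s. play_vs_I \<sigma> s \<longrightarrow> (\<Union>k. s k) \<notin> F"
    by blast
  have \<sigma>F: "\<sigma> h \<in> F" for h using sg unfolding strategy_I_def by blast
  define H where "H m = {h :: nat set list. set h \<subseteq> Pow {..<m} \<and> length h \<le> m}" for m :: nat
  have finH: "finite (H m)" for m unfolding H_def by (rule finite_lists_length_le) simp
  have nilH: "[] \<in> H m" for m by (simp add: H_def)
  define Xs where "Xs m = \<Inter> (\<sigma> ` H m)" for m
  have XsF: "Xs m \<in> F" for m
    unfolding Xs_def
  proof (rule pf_Inter[OF pf])
    show "finite (\<sigma> ` H m)" using finH by simp
    show "\<sigma> ` H m \<noteq> {}" using nilH by blast
    show "\<sigma> ` H m \<subseteq> F" using \<sigma>F by blast
  qed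
  have "\<forall>Ys :: nat \<Rightarrow> nat set. (\<forall>n. Ys n \<in> F) \<longrightarrow> (\<exists>X\<in>F. \<forall>n. finite (X - Ys n))"
    using P unfolding P_filter_def by (rule conjunct2)
  then have "\<exists>X\<in>F. \<forall>n. finite (X - Xs n)" using XsF by blast
  then obtain X where XF: "X \<in> F" and Xfin: "\<forall>n. finite (X - Xs n)" by blast
  have "\<forall>m. \<exists>b. X - Xs m \<subseteq> {..<b}"
  proof
    fix m show "\<exists>b. X - Xs m \<subseteq> {..<b}" using finite_nat_bounded Xfin by blast
  qed
  then obtain g :: "nat \<Rightarrow> nat" where g: "\<forall>m. X - Xs m \<subseteq> {..<g m}"
    using choice[of "\<lambda>m b. X - Xs m \<subseteq> {..<b}"] by blast
  have key: "X - {..<g m} \<subseteq> \<sigma> h" if "h \<in> H m" for h m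
  proof
    fix x assume x: "x \<in> X - {..<g m}"
    then have "x \<in> Xs m" using g by blast
    then show "x \<in> \<sigma> h" using that unfolding Xs_def by blast
  qed
  define mm where "mm = rec_nat 0 (\<lambda>i a. max (Suc a) (g a))"
  have mm0: "mm 0 = 0" and mmS: "mm (Suc i) = max (Suc (mm i)) (g (mm i))" for i
    by (simp_all add: mm_def)
  have sm: "strict_mono mm" by (rule strict_monoI_Suc) (simp add: mmS)
  have mmge: "i \<le> mm i" for i by (rule strict_mono_ge[OF sm])
  obtain A where AF: "A \<in> F" and Ainf: "infinite {i. A \<inter> {mm i..<mm (Suc i)} = {}}"
    using nonmeager_missing[OF nm sm] by blast
  define B where "B = A \<inter> X"
  have BF: "B \<in> F" unfolding B_def by (rule pf_inter[OF pf AF XF])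
  have Binf: "infinite B" by (rule pf_inf[OF pf BF])
  define Mi where "Mi = {i. B \<inter> {mm i..<mm (Suc i)} = {}}"
  have "{i. A \<inter> {mm i..<mm (Suc i)} = {}} \<subseteq> Mi" unfolding Mi_def B_def by blast
  then have Mi_inf: "infinite Mi" using Ainf finite_subset by blast
  have nxt_ex: "\<exists>i. i \<in> Mi \<and> i > e \<and> B \<inter> {mm (Suc e)..<mm i} \<noteq> {}" for e
  proof -
    have "\<exists>b\<ge>mm (Suc e). b \<in> B" using Binf unfolding infinite_nat_iff_unbounded_le by blast
    then obtain b where b: "b \<in> B" "b \<ge> mm (Suc e)" by blast
    have "\<exists>i\<ge>Suc (max e b). i \<in> Mi" using Mi_inf unfolding infinite_nat_iff_unbounded_le by blast
    then obtain i where i: "i \<in> Mi" "i \<ge> Suc (max e b)" by blast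
    have "b < mm i" using mmge[of i] i(2) by simp
    then have "b \<in> B \<inter> {mm (Suc e)..<mm i}" using b by simp
    then have "B \<inter> {mm (Suc e)..<mm i} \<noteq> {}" by blast
    moreover have "i > e" using i(2) by simp
    ultimately show ?thesis using i(1) by blast
  qed
  define nx where "nx e = (SOME i. i \<in> Mi \<and> i > e \<and> B \<inter> {mm (Suc e)..<mm i} \<noteq> {})" for e
  have nx: "nx e \<in> Mi \<and> nx e > e \<and> B \<inter> {mm (Suc e)..<mm (nx e)} \<noteq> {}" for e
    unfolding nx_def by (rule someI_ex) (rule nxt_ex)
  have "Mi \<noteq> {}" using Mi_inf by auto
  then obtain e0 where e0: "e0 \<in> Mi" by blast
  define e where "e = rec_nat e0 (\<lambda>k a. nx a)"
  have e_0: "e 0 = e0" and eS: "e (Suc k) = nx (e k)" for k by (simp_all add: e_def)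
  have esm: "strict_mono e" by (rule strict_monoI_Suc) (simp add: eS nx)
  have ege: "k \<le> e k" for k by (rule strict_mono_ge[OF esm])
  have eM: "e k \<in> Mi" for k by (cases k) (simp_all add: e_0 e0 eS nx)
  have cmono: "strict_mono (\<lambda>k. mm (e k))" using sm esm by (simp add: strict_mono_def)
  define s where "s k = B \<inter> {mm (Suc (e k))..<mm (e (Suc k))}" for k
  have play: "play_vs_I \<sigma> s"
    unfolding play_vs_I_def
  proof (intro allI conjI)
    fix k
    show "finite (s k)" unfolding s_def by simp
    show "s k \<noteq> {}" unfolding s_def eS using nx[of "e k"] by simp
    let ?h = "map s [0..<k]"
    have "set ?h \<subseteq> Pow {..<mm (e k)}"
    proof
      fix y assume "y \<in> set ?h"
      then obtain j where j: "j < k" "y = s j" by auto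
      have "mm (e (Suc j)) \<le> mm (e k)" using strict_mono_less_eq[OF cmono, of "Suc j" k] j(1) by simp
      then show "y \<in> Pow {..<mm (e k)}" unfolding j(2) s_def by auto
    qed
    moreover have "length ?h \<le> mm (e k)" using ege[of k] mmge[of "e k"] by simp
    ultimately have hH: "?h \<in> H (mm (e k))" unfolding H_def by blast
    have "s k \<subseteq> X - {..<g (mm (e k))}"
    proof
      fix x assume "x \<in> s k"
      then have "x \<in> X" "mm (Suc (e k)) \<le> x" unfolding s_def B_def by auto
      moreover have "g (mm (e k)) \<le> mm (Suc (e k))" by (simp add: mmS)
      ultimately show "x \<in> X - {..<g (mm (e k))}" by simp
    qed
    then show "s k \<subseteq> \<sigma> ?h" using key[OF hH] by blast
  qed
  have sub: "B \<inter> {mm (Suc (e 0))..} \<subseteq> (\<Union>k. s k)"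
  proof
    fix b assume b: "b \<in> B \<inter> {mm (Suc (e 0))..}"
    have "mm (e 0) \<le> mm (Suc (e 0))" using sm by (simp add: strict_mono_less_eq)
    then have "mm (e 0) \<le> b" using b by simp
    then obtain k where k: "mm (e k) \<le> b" "b < mm (e (Suc k))"
      using strict_mono_interval[OF cmono, of b] by blast
    have "b \<notin> {mm (e k)..<mm (Suc (e k))}" using eM[of k] b unfolding Mi_def by blast
    then have "mm (Suc (e k)) \<le> b" using k(1) by simp
    then have "b \<in> s k" unfolding s_def using b k(2) by simp
    then show "b \<in> (\<Union>k. s k)" by blast
  qed
  have "B \<inter> {mm (Suc (e 0))..} \<in> F" by (rule pf_inter[OF pf BF pf_atLeast[OF pf]])
  then have "(\<Union>k. s k) \<in> F" using sub by (rule pf_up[OF pf])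
  then show False using win play by blast
qed



lemma not_II:
  assumes pf: "proper_filter F"
  shows "\<not> II_has_winning_strategy F F"
proof
  assume "II_has_winning_strategy F F"
  then have "\<exists>\<tau>. strategy_II F \<tau> \<and> (\<forall>X :: nat \<Rightarrow> nat set. (\<forall>k. X k \<in> F) \<longrightarrow> (\<Union>k. \<tau> (map X [0..<Suc k])) \<in> F)"
    unfolding II_has_winning_strategy_def .
  then obtain \<tau> :: "nat set list \<Rightarrow> nat set" where st: "strategy_II F \<tau>"
    and win: "\<forall>X :: nat \<Rightarrow> nat set. (\<forall>k. X k \<in> F) \<longrightarrow> (\<Union>k. \<tau> (map X [0..<Suc k])) \<in> F"
    by blast
  have tau: "finite (\<tau> xs) \<and> \<tau> xs \<noteq> {} \<and> \<tau> xs \<subseteq> last xs" if "xs \<noteq> []" "set xs \<subseteq> F" for xs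
    using st that unfolding strategy_II_def by blast
  define R where "R xs = (\<Union>j\<in>{1..length xs}. \<tau> (take j xs))" for xs :: "nat set list"
  have Rfin: "finite (R xs)" if "set xs \<subseteq> F" for xs
    unfolding R_def
  proof (rule finite_UN_I)
    show "finite {1..length xs}" by simp
    fix j assume j: "j \<in> {1..length xs}"
    have "take j xs \<noteq> []" using j by (cases xs) auto
    moreover have "set (take j xs) \<subseteq> F" using that set_take_subset[of j xs] by (rule order_trans[rotated])
    ultimately show "finite (\<tau> (take j xs))" using tau[of "take j xs"] by simp
  qed
  have Rsub: "\<tau> (take j xs) \<subseteq> R xs" if "1 \<le> j" "j \<le> length xs" for j xs
    unfolding R_def by (rule UN_upper) (use that in simp)
  define bnd where "bnd S = Suc (Max (insert 0 S))" for S :: "nat set"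
  have bnd: "x < bnd S" if "finite S" "x \<in> S" for x S
  proof -
    have "x \<le> Max (insert 0 S)" using that by (intro Max_ge) auto
    then show ?thesis unfolding bnd_def by simp
  qed
  define stp where "stp = (\<lambda>(p :: nat set list \<times> nat set list).
     (fst p @ [{bnd (R (fst p) \<union> R (snd p))..}],
      snd p @ [{bnd (R (fst p @ [{bnd (R (fst p) \<union> R (snd p))..}]) \<union> R (snd p))..}]))"
  define ST where "ST = rec_nat ([], []) (\<lambda>k p. stp p)"
  define as where "as n = fst (ST n)" for n
  define bs where "bs n = snd (ST n)" for n
  have as0: "as 0 = []" and bs0: "bs 0 = []" by (simp_all add: as_def bs_def ST_def)
  have asS: "as (Suc n) = as n @ [{bnd (R (as n) \<union> R (bs n))..}]" for n
    by (simp add: as_def bs_def ST_def stp_def)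
  have bsS: "bs (Suc n) = bs n @ [{bnd (R (as (Suc n)) \<union> R (bs n))..}]" for n
    by (simp add: as_def bs_def ST_def stp_def)
  have len: "length (as n) = n \<and> length (bs n) = n" for n
    by (induction n) (simp_all add: as0 bs0 asS bsS)
  have inF: "set (as n) \<subseteq> F \<and> set (bs n) \<subseteq> F" for n
  proof (induction n)
    case 0 then show ?case by (simp add: as0 bs0)
  next
    case (Suc n) then show ?case by (simp add: asS bsS pf_atLeast[OF pf])
  qed
  have takeA: "take k (as n) = as k \<and> take k (bs n) = bs k" if "k \<le> n" for k n
    using that
  proof (induction n)
    case 0 then show ?case by (simp add: as0 bs0)
  next
    case (Suc n)
    show ?case
    proof (cases "k = Suc n")
      case True
      then show ?thesis using len[of "Suc n"] by simp
    next
      case False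
      then have "k \<le> n" using Suc.prems by simp
      then have "take k (as (Suc n)) = take k (as n) \<and> take k (bs (Suc n)) = take k (bs n)"
        using len[of n] by (simp add: asS bsS)
      then show ?thesis using Suc.IH[OF \<open>k \<le> n\<close>] by simp
    qed
  qed
  define XA where "XA k = as (Suc k) ! k" for k
  define XB where "XB k = bs (Suc k) ! k" for k
  have XA: "XA k = {bnd (R (as k) \<union> R (bs k))..}" for k
    unfolding XA_def asS using len[of k] by (simp add: nth_append)
  have XB: "XB k = {bnd (R (as (Suc k)) \<union> R (bs k))..}" for k
    unfolding XB_def bsS using len[of k] by (simp add: nth_append)
  have mapA: "map XA [0..<n] = as n" for n
  proof (induction n)
    case 0 then show ?case by (simp add: as0)
  next
    case (Suc n) then show ?case by (simp add: asS XA)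
  qed
  have mapB: "map XB [0..<n] = bs n" for n
  proof (induction n)
    case 0 then show ?case by (simp add: bs0)
  next
    case (Suc n) then show ?case by (simp add: bsS XB)
  qed
  have XAF: "\<forall>k. XA k \<in> F" by (simp add: XA pf_atLeast[OF pf])
  have "(\<Union>k. \<tau> (map XA [0..<Suc k])) \<in> F"
    by (rule mp[OF spec[OF win, of XA] XAF])
  then have UA: "(\<Union>k. \<tau> (as (Suc k))) \<in> F" by (simp only: mapA)
  have XBF: "\<forall>k. XB k \<in> F" by (simp add: XB pf_atLeast[OF pf])
  have "(\<Union>k. \<tau> (map XB [0..<Suc k])) \<in> F"
    by (rule mp[OF spec[OF win, of XB] XBF])
  then have UB: "(\<Union>k. \<tau> (bs (Suc k))) \<in> F" by (simp only: mapB)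
  have tauA: "\<tau> (as (Suc k)) \<subseteq> {bnd (R (as k) \<union> R (bs k))..}" for k
  proof -
    have "as (Suc k) \<noteq> []" by (simp add: asS)
    moreover have "set (as (Suc k)) \<subseteq> F" using inF[of "Suc k"] by simp
    ultimately have "\<tau> (as (Suc k)) \<subseteq> last (as (Suc k))" using tau by blast
    then show ?thesis by (simp add: asS)
  qed
  have tauB: "\<tau> (bs (Suc k)) \<subseteq> {bnd (R (as (Suc k)) \<union> R (bs k))..}" for k
  proof -
    have "bs (Suc k) \<noteq> []" by (simp add: bsS)
    moreover have "set (bs (Suc k)) \<subseteq> F" using inF[of "Suc k"] by simp
    ultimately have "\<tau> (bs (Suc k)) \<subseteq> last (bs (Suc k))" using tau by blast
    then show ?thesis by (simp add: bsS)
  qed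
  have disj: "\<tau> (as (Suc k)) \<inter> \<tau> (bs (Suc j)) = {}" for k j
  proof (cases "j < k")
    case True
    have "\<tau> (bs (Suc j)) = \<tau> (take (Suc j) (bs k))" using takeA[of "Suc j" k] True by simp
    also have "\<dots> \<subseteq> R (bs k)" using Rsub[of "Suc j" "bs k"] len[of k] True by simp
    finally have sb: "\<tau> (bs (Suc j)) \<subseteq> R (bs k)" .
    have fin: "finite (R (as k) \<union> R (bs k))" using Rfin inF by blast
    show ?thesis
    proof (rule ccontr)
      assume "\<not> ?thesis"
      then obtain x where x: "x \<in> \<tau> (as (Suc k))" "x \<in> \<tau> (bs (Suc j))" by blast
      then have "x < bnd (R (as k) \<union> R (bs k))" using sb bnd[OF fin] by blast
      moreover have "x \<ge> bnd (R (as k) \<union> R (bs k))" using x(1) tauA by blast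
      ultimately show False by simp
    qed
  next
    case False
    have "\<tau> (as (Suc k)) = \<tau> (take (Suc k) (as (Suc j)))" using takeA[of "Suc k" "Suc j"] False by simp
    also have "\<dots> \<subseteq> R (as (Suc j))" using Rsub[of "Suc k" "as (Suc j)"] len[of "Suc j"] False by simp
    finally have sb: "\<tau> (as (Suc k)) \<subseteq> R (as (Suc j))" .
    have fin: "finite (R (as (Suc j)) \<union> R (bs j))" using Rfin inF by blast
    show ?thesis
    proof (rule ccontr)
      assume "\<not> ?thesis"
      then obtain x where x: "x \<in> \<tau> (as (Suc k))" "x \<in> \<tau> (bs (Suc j))" by blast
      then have "x < bnd (R (as (Suc j)) \<union> R (bs j))" using sb bnd[OF fin] by blast
      moreover have "x \<ge> bnd (R (as (Suc j)) \<union> R (bs j))" using x(2) tauB by blast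
      ultimately show False by simp
    qed
  qed
  have "(\<Union>k. \<tau> (as (Suc k))) \<inter> (\<Union>k. \<tau> (bs (Suc k))) = {}" using disj by blast
  moreover have "(\<Union>k. \<tau> (as (Suc k))) \<inter> (\<Union>k. \<tau> (bs (Suc k))) \<in> F"
    by (rule pf_inter[OF pf UA UB])
  ultimately have "{} \<in> F" by simp
  then show False using pf_inf[OF pf] by blast
qed

theorem theorem2p15:
  fixes F :: "nat set set"
  assumes "proper_filter F"
  shows "(\<not> I_has_winning_strategy F F \<longleftrightarrow> P_filter F \<and> \<not> meager_family F)
         \<and> \<not> II_has_winning_strategy F F"
proof -
  have 1: "\<not> I_has_winning_strategy F F \<longleftrightarrow> P_filter F \<and> \<not> meager_family F"
  proof
    assume "\<not> I_has_winning_strategy F F"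
    then show "P_filter F \<and> \<not> meager_family F"
      using notP_I_wins[OF assms] meager_I_wins[OF assms] by blast
  next
    assume "P_filter F \<and> \<not> meager_family F"
    then show "\<not> I_has_winning_strategy F F" using PNM_not_I[OF assms] by blast
  qed
  have 2: "\<not> II_has_winning_strategy F F" by (rule not_II[OF assms])
  show ?thesis using 1 2 by blast
qed

end
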